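(* Let $\alpha\in(0,2)$ and $\eta>0$. For each $x\in\mathbb{R}$ let $X(x)$ be a symmetric real random variable, and let $\sigma:\mathbb{R}\to\mathbb{R}_+$ be bounded, such that $$\lim_{u\to+\infty}\sup_{x\in\mathbb{R}}\left|u^\alpha\,\mathbb{P}(|X(x)|\geq u)-\frac{2\sigma(x)}{\alpha}\right|=0.$$ For $K\geq 1$ let $M_K(x,dh)$ denote the law of $X(x)/K^{\eta/\alpha}$. Then: (i) if $\alpha\in(1,2)$, for every $f\in C^2_b(\mathbb{R})$, $$K^\eta\int_\mathbb{R}(f(x+h)-f(x))\,M_K(x,dh)\longrightarrow \sigma(x)\int_\mathbb{R}\big(f(x+z)-f(x)-f'(x)z\mathbf{1}_{\{|z|\leq1\}}\big)\frac{dz}{|z|^{1+\alpha}}$$ as $K\to\infty$, uniformly in $x\in\mathbb{R}$; (ii) if $\alpha\in(0,1]$, the same uniform convergence holds for every compactly supported $f\in C^2_b(\mathbb{R})$.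
   Context: $C^2_b(\mathbb{R})$ denotes the twice continuously differentiable functions on $\mathbb{R}$ which are bounded together with their first two derivatives. *)

theory Defs
  imports "HOL-Probability.Probability"
begin

definition C2b :: "(real \<Rightarrow> real) \<Rightarrow> bool" where
  "C2b f \<longleftrightarrow> (\<exists>f' f''.
      (\<forall>x. (f has_real_derivative f' x) (at x)) \<and>
      (\<forall>x. (f' has_real_derivative f'' x) (at x)) \<and>
      continuous_on UNIV f'' \<and>
      bounded (range f) \<and> bounded (range f') \<and> bounded (range f''))"

definition compact_support :: "(real \<Rightarrow> real) \<Rightarrow> bool" where
  "compact_support f \<longleftrightarrow> compact (closure {x. f x \<noteq> 0})"

end

theory Submission
  imports Defs
begin


lemma hbi_powr_0:
  fixes a b :: real
  assumes b: "b > -1" and a: "a \<ge> 0"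
  shows "has_bochner_integral lborel (\<lambda>t. indicator {0..a} t * t powr b) (a powr (b+1) / (b+1))"
proof (rule has_bochner_integral_nn_integral)
  show "(\<lambda>t. indicator {0..a} t * t powr b) \<in> borel_measurable lborel" by measurable
  show "AE x in lborel. 0 \<le> indicator {0..a} x * x powr b" by simp
  show "0 \<le> a powr (b+1) / (b+1)" using b by simp
  have "(\<integral>\<^sup>+ t. ennreal (indicator {0..a} t * t powr b) \<partial>lborel)
      = (\<integral>\<^sup>+ t. ennreal (t powr b) * indicator {0..a} t \<partial>lborel)"
    by (intro nn_integral_cong) (auto split: split_indicator)
  also have "\<dots> = ennreal (a powr (b+1) / (b+1))"
    by (rule nn_integral_has_integral_lebesgue'[OF _ has_integral_powr_from_0[OF b a]]) simp
  finally show "(\<integral>\<^sup>+ t. ennreal (indicator {0..a} t * t powr b) \<partial>lborel) = ennreal (a powr (b+1) / (b+1))" .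
qed

lemma hbi_powr_inf:
  fixes a b :: real
  assumes b: "b < -1" and a: "a > 0"
  shows "has_bochner_integral lborel (\<lambda>t. indicator {a..} t * t powr b) (-(a powr (b+1)) / (b+1))"
proof (rule has_bochner_integral_nn_integral)
  show "(\<lambda>t. indicator {a..} t * t powr b) \<in> borel_measurable lborel" by measurable
  show "AE x in lborel. 0 \<le> indicator {a..} x * x powr b" by simp
  show "0 \<le> -(a powr (b+1)) / (b+1)" using b by (simp add: divide_nonneg_neg)
  have "(\<integral>\<^sup>+ t. ennreal (indicator {a..} t * t powr b) \<partial>lborel)
      = (\<integral>\<^sup>+ t. ennreal (t powr b) * indicator {a..} t \<partial>lborel)"
    by (intro nn_integral_cong) (auto split: split_indicator)
  also have "\<dots> = ennreal (-(a powr (b+1)) / (b+1))"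
    by (rule nn_integral_has_integral_lebesgue'[OF _ has_integral_powr_to_inf[OF b a]]) simp
  finally show "(\<integral>\<^sup>+ t. ennreal (indicator {a..} t * t powr b) \<partial>lborel) = ennreal (-(a powr (b+1)) / (b+1))" .
qed

lemma hbi_powr_0_sym:
  fixes a b :: real
  assumes b: "b > -1" and a: "a \<ge> 0"
  shows "has_bochner_integral lborel (\<lambda>t. indicator {-a..a} t * \<bar>t\<bar> powr b) (2 * (a powr (b+1) / (b+1)))"
proof -
  have "has_bochner_integral lborel (\<lambda>t. indicator {0..} t *\<^sub>R (indicator {-a..a} t * \<bar>t\<bar> powr b)) (a powr (b+1) / (b+1))"
    using hbi_powr_0[OF b a]
    by (rule has_bochner_integral_cong[THEN iffD1, rotated 3]) (auto split: split_indicator)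
  from has_bochner_integral_even_function[OF this]
  show ?thesis by (auto split: split_indicator)
qed

lemma hbi_powr_inf_sym:
  fixes a b :: real
  assumes b: "b < -1" and a: "a > 0"
  shows "has_bochner_integral lborel (\<lambda>t. indicator {t. a \<le> \<bar>t\<bar>} t * \<bar>t\<bar> powr b) (2 * (-(a powr (b+1)) / (b+1)))"
proof -
  have "has_bochner_integral lborel (\<lambda>t. indicator {0..} t *\<^sub>R (indicator {t. a \<le> \<bar>t\<bar>} t * \<bar>t\<bar> powr b)) (-(a powr (b+1)) / (b+1))"
    using hbi_powr_inf[OF b a]
    by (rule has_bochner_integral_cong[THEN iffD1, rotated 3]) (use a in \<open>auto split: split_indicator\<close>)
  from has_bochner_integral_even_function[OF this]
  show ?thesis by (auto split: split_indicator)
qed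



lemma fubini_layer:
  fixes M :: "real measure" and g w :: "real \<Rightarrow> real" and R B :: real
  assumes sets: "sets M = sets borel" and sf: "sigma_finite_measure M"
    and R: "R > 0"
    and g[measurable]: "g \<in> borel_measurable borel" and gb: "\<And>t. 0 \<le> t \<Longrightarrow> \<bar>g t\<bar> \<le> B * t"
    and w[measurable]: "w \<in> borel_measurable borel" and wnn: "\<And>h. 0 \<le> w h"
    and wint: "\<And>t. 0 < t \<Longrightarrow> integrable M (\<lambda>h. indicator {h. t \<le> \<bar>h\<bar> \<and> \<bar>h\<bar> < R} h * w h)"
    and Wint: "integrable lborel (\<lambda>t. indicator {0..R} t * t * (\<integral>h. indicator {h. t \<le> \<bar>h\<bar> \<and> \<bar>h\<bar> < R} h * w h \<partial>M))"
  shows "(\<integral>h. indicator {h. \<bar>h\<bar> < R} h * (LBINT t:{0..\<bar>h\<bar>}. g t) * w h \<partial>M)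
       = (\<integral>t. g t * indicator {0..R} t * (\<integral>h. indicator {h. t \<le> \<bar>h\<bar> \<and> \<bar>h\<bar> < R} h * w h \<partial>M) \<partial>lborel)"
proof -
  interpret sigma_finite_measure M by (rule sf)
  interpret P: pair_sigma_finite lborel M
    by (intro pair_sigma_finite.intro lborel.sigma_finite_measure_axioms sf)
  define F where "F = (\<lambda>t h. g t * indicator {0..R} t * (indicator {h. t \<le> \<bar>h\<bar> \<and> \<bar>h\<bar> < R} h * w h))"
  have measM: "measurable M = measurable borel" "measurable (lborel \<Otimes>\<^sub>M M) = measurable (borel \<Otimes>\<^sub>M borel)"
    using sets by (auto intro!: measurable_cong_sets sets_pair_measure_cong)
  have Fm[measurable]: "case_prod F \<in> borel_measurable (lborel \<Otimes>\<^sub>M M)"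
    unfolding measM F_def by measurable
  have B0: "0 \<le> B" using gb[of 1] by simp
  have g0: "g 0 = 0" using gb[of 0] by simp
  have W_meas: "(\<lambda>t. \<integral>h. indicator {h. t \<le> \<bar>h\<bar> \<and> \<bar>h\<bar> < R} h * w h \<partial>M) \<in> borel_measurable lborel"
  proof -
    have "(\<lambda>(t,h). indicator {h. t \<le> \<bar>h\<bar> \<and> \<bar>h\<bar> < R} h * w h) \<in> borel_measurable (lborel \<Otimes>\<^sub>M M)"
      unfolding measM by measurable
    then show ?thesis by (rule borel_measurable_lebesgue_integral)
  qed
  have int: "integrable (lborel \<Otimes>\<^sub>M M) (case_prod F)"
  proof (rule P.Fubini_integrable)
    show "case_prod F \<in> borel_measurable (lborel \<Otimes>\<^sub>M M)" by (rule Fm)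
    have eq: "(\<lambda>t. \<integral>h. norm (case_prod F (t, h)) \<partial>M)
        = (\<lambda>t. \<bar>g t\<bar> * indicator {0..R} t * (\<integral>h. indicator {h. t \<le> \<bar>h\<bar> \<and> \<bar>h\<bar> < R} h * w h \<partial>M))"
    proof
      fix t
      have "(\<integral>h. norm (case_prod F (t, h)) \<partial>M)
          = (\<integral>h. (\<bar>g t\<bar> * indicator {0..R} t) * (indicator {h. t \<le> \<bar>h\<bar> \<and> \<bar>h\<bar> < R} h * w h) \<partial>M)"
        by (intro Bochner_Integration.integral_cong) (auto simp: F_def abs_mult wnn split: split_indicator)
      also have "\<dots> = \<bar>g t\<bar> * indicator {0..R} t * (\<integral>h. indicator {h. t \<le> \<bar>h\<bar> \<and> \<bar>h\<bar> < R} h * w h \<partial>M)"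
        by (rule integral_mult_right_zero)
      finally show "(\<integral>h. norm (case_prod F (t, h)) \<partial>M) = \<bar>g t\<bar> * indicator {0..R} t * (\<integral>h. indicator {h. t \<le> \<bar>h\<bar> \<and> \<bar>h\<bar> < R} h * w h \<partial>M)" .
    qed
    show "integrable lborel (\<lambda>t. \<integral>h. norm (case_prod F (t, h)) \<partial>M)"
      unfolding eq
    proof (rule Bochner_Integration.integrable_bound)
      show "integrable lborel (\<lambda>t. B * (indicator {0..R} t * t * (\<integral>h. indicator {h. t \<le> \<bar>h\<bar> \<and> \<bar>h\<bar> < R} h * w h \<partial>M)))"
        using Wint by (rule integrable_mult_right)
      show "(\<lambda>t. \<bar>g t\<bar> * indicator {0..R} t * (\<integral>h. indicator {h. t \<le> \<bar>h\<bar> \<and> \<bar>h\<bar> < R} h * w h \<partial>M)) \<in> borel_measurable lborel"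
        using W_meas by measurable
      show "AE t in lborel. norm (\<bar>g t\<bar> * indicator {0..R} t * (\<integral>h. indicator {h. t \<le> \<bar>h\<bar> \<and> \<bar>h\<bar> < R} h * w h \<partial>M))
          \<le> norm (B * (indicator {0..R} t * t * (\<integral>h. indicator {h. t \<le> \<bar>h\<bar> \<and> \<bar>h\<bar> < R} h * w h \<partial>M)))"
      proof (intro AE_I2)
        fix t :: real
        have Wnn: "0 \<le> (\<integral>h. indicator {h. t \<le> \<bar>h\<bar> \<and> \<bar>h\<bar> < R} h * w h \<partial>M)"
          by (intro integral_nonneg_AE) (auto simp: wnn)
        show "norm (\<bar>g t\<bar> * indicator {0..R} t * (\<integral>h. indicator {h. t \<le> \<bar>h\<bar> \<and> \<bar>h\<bar> < R} h * w h \<partial>M))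
          \<le> norm (B * (indicator {0..R} t * t * (\<integral>h. indicator {h. t \<le> \<bar>h\<bar> \<and> \<bar>h\<bar> < R} h * w h \<partial>M)))"
          using Wnn gb[of t] B0
          by (auto simp: abs_mult mult.assoc[symmetric] split: split_indicator intro!: mult_right_mono)
      qed
    qed
    show "AE t in lborel. integrable M (\<lambda>h. case_prod F (t, h))"
    proof (intro AE_I2)
      fix t :: real
      show "integrable M (\<lambda>h. case_prod F (t, h))"
      proof (cases "0 < t")
        case True
        show ?thesis unfolding F_def split
          by (intro integrable_mult_right wint True)
      next
        case False
        then have "(\<lambda>h. case_prod F (t, h)) = (\<lambda>h. 0)"
          by (auto simp: F_def g0 split: split_indicator)
        then show ?thesis by simp
      qed
    qed
  qed
  have "(\<integral>h. (\<integral>t. F t h \<partial>lborel) \<partial>M) = (\<integral>t. (\<integral>h. F t h \<partial>M) \<partial>lborel)"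
    using int by (rule P.Fubini_integral)
  moreover have "(\<integral>h. (\<integral>t. F t h \<partial>lborel) \<partial>M) = (\<integral>h. indicator {h. \<bar>h\<bar> < R} h * (LBINT t:{0..\<bar>h\<bar>}. g t) * w h \<partial>M)"
  proof (intro Bochner_Integration.integral_cong refl)
    fix h
    have "(\<integral>t. F t h \<partial>lborel) = (\<integral>t. (indicator {0..\<bar>h\<bar>} t *\<^sub>R g t) * (indicator {h. \<bar>h\<bar> < R} h * w h) \<partial>lborel)"
      by (intro Bochner_Integration.integral_cong) (auto simp: F_def split: split_indicator)
    also have "\<dots> = (LBINT t:{0..\<bar>h\<bar>}. g t) * (indicator {h. \<bar>h\<bar> < R} h * w h)"
      unfolding set_lebesgue_integral_def by (rule integral_mult_left_zero)
    finally show "(\<integral>t. F t h \<partial>lborel) = indicator {h. \<bar>h\<bar> < R} h * (LBINT t:{0..\<bar>h\<bar>}. g t) * w h"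
      by simp
  qed
  moreover have "(\<integral>t. (\<integral>h. F t h \<partial>M) \<partial>lborel) = (\<integral>t. g t * indicator {0..R} t * (\<integral>h. indicator {h. t \<le> \<bar>h\<bar> \<and> \<bar>h\<bar> < R} h * w h \<partial>M) \<partial>lborel)"
    unfolding F_def by (intro Bochner_Integration.integral_cong refl integral_mult_right_zero)
  ultimately show ?thesis by simp
qed



lemma lip_from_deriv:
  fixes \<phi> \<phi>' :: "real \<Rightarrow> real"
  assumes d: "\<And>x. (\<phi> has_real_derivative \<phi>' x) (at x)" and b: "\<And>x. \<bar>\<phi>' x\<bar> \<le> C"
  shows "\<bar>\<phi> a - \<phi> b\<bar> \<le> C * \<bar>a - b\<bar>"
proof -
  have *: "\<bar>\<phi> v - \<phi> u\<bar> \<le> C * \<bar>v - u\<bar>" if "u < v" for u v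
  proof -
    obtain z where "\<phi> v - \<phi> u = (v - u) * \<phi>' z" using MVT2[of u v \<phi> \<phi>'] \<open>u < v\<close> d by blast
    then have "\<bar>\<phi> v - \<phi> u\<bar> = \<bar>v - u\<bar> * \<bar>\<phi>' z\<bar>" by (simp add: abs_mult)
    also have "\<dots> \<le> \<bar>v - u\<bar> * C" by (intro mult_left_mono b) simp
    finally show ?thesis by (simp add: mult.commute)
  qed
  consider "a < b" | "a = b" | "b < a" by linarith
  then show ?thesis
  proof cases
    case 1 then show ?thesis using *[OF 1] by (simp add: abs_minus_commute)
  next
    case 2 then show ?thesis by simp
  next
    case 3 then show ?thesis using *[OF 3] by simp
  qed
qed

lemma taylor_bound:
  fixes f f' f'' :: "real \<Rightarrow> real"
  assumes df: "\<And>x. (f has_real_derivative f' x) (at x)"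
    and df': "\<And>x. (f' has_real_derivative f'' x) (at x)"
    and b: "\<And>x. \<bar>f'' x\<bar> \<le> B"
  shows "\<bar>f (x + z) - f x - f' x * z\<bar> \<le> B * z\<^sup>2"
proof -
  have B0: "0 \<le> B" using b[of 0] by simp
  have main: "\<bar>f (x + z) - f x - f' x * z\<bar> \<le> B * z\<^sup>2" if "z \<noteq> 0" for z
  proof -
    have "\<exists>\<xi>. \<bar>\<xi> - x\<bar> \<le> \<bar>z\<bar> \<and> f (x + z) - f x = z * f' \<xi>"
    proof (cases "z > 0")
      case True
      obtain \<xi> where "x < \<xi>" "\<xi> < x + z" "f (x + z) - f x = (x + z - x) * f' \<xi>"
        using MVT2[of x "x+z" f f'] True df by auto
      then show ?thesis by (intro exI[of _ \<xi>]) auto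
    next
      case False
      with that have z: "z < 0" by simp
      obtain \<xi> where "x + z < \<xi>" "\<xi> < x" "f x - f (x + z) = (x - (x + z)) * f' \<xi>"
        using MVT2[of "x+z" x f f'] z df by auto
      then show ?thesis by (intro exI[of _ \<xi>]) (auto simp: algebra_simps)
    qed
    then obtain \<xi> where xi: "\<bar>\<xi> - x\<bar> \<le> \<bar>z\<bar>" "f (x + z) - f x = z * f' \<xi>" by blast
    have "\<bar>f (x + z) - f x - f' x * z\<bar> = \<bar>z\<bar> * \<bar>f' \<xi> - f' x\<bar>"
      using xi by (simp add: abs_mult[symmetric] algebra_simps)
    also have "\<dots> \<le> \<bar>z\<bar> * (B * \<bar>\<xi> - x\<bar>)"
      by (intro mult_left_mono lip_from_deriv[OF df' b]) simp
    also have "\<dots> \<le> \<bar>z\<bar> * (B * \<bar>z\<bar>)"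
      by (intro mult_left_mono xi B0) auto
    finally show ?thesis by (simp add: power2_eq_square abs_mult_self mult_ac)
  qed
  show ?thesis by (cases "z = 0") (auto intro: main)
qed

lemma Gh_FTC:
  fixes f f' :: "real \<Rightarrow> real"
  assumes df: "\<And>x. (f has_real_derivative f' x) (at x)"
    and df': "\<And>x. (f' has_real_derivative f'' x) (at x)"
    and s: "0 \<le> s"
  shows "(LBINT t:{0..s}. (f' (x + t) - f' (x - t)) / 2) = (f (x + s) + f (x - s)) / 2 - f x"
proof -
  have cf': "continuous_on UNIV f'"
    using df' by (intro continuous_at_imp_continuous_on) (auto intro: DERIV_isCont)
  have cont: "continuous_on {0..s} (\<lambda>t. (f' (x + t) - f' (x - t)) / 2)"
    by (intro continuous_intros continuous_on_compose2[OF cf']) auto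
  have der: "((\<lambda>t. (f (x + t) + f (x - t)) / 2) has_vector_derivative (f' (x + t) - f' (x - t)) / 2) (at t within {0..s})" for t
  proof -
    have a: "((\<lambda>t. f (x + t)) has_real_derivative f' (x + t) * 1) (at t)"
      by (rule DERIV_chain2[OF df]) (auto intro!: derivative_eq_intros)
    have b: "((\<lambda>t. f (x - t)) has_real_derivative f' (x - t) * (-1)) (at t)"
      by (rule DERIV_chain2[OF df]) (auto intro!: derivative_eq_intros)
    have "((\<lambda>t. (f (x + t) + f (x - t)) / 2) has_real_derivative (f' (x + t) * 1 + f' (x - t) * (- 1)) / 2) (at t)"
      by (intro DERIV_cdivide DERIV_add a b)
    then show ?thesis
      by (auto simp: has_real_derivative_iff_has_vector_derivative[symmetric] intro: has_field_derivative_at_within)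
  qed
  have "integral\<^sup>L lborel (\<lambda>t. indicator {0..s} t *\<^sub>R ((f' (x + t) - f' (x - t)) / 2))
      = (f (x + s) + f (x - s)) / 2 - (f (x + 0) + f (x - 0)) / 2"
    by (rule integral_FTC_atLeastAtMost[OF s der cont])
  then show ?thesis by (simp add: set_lebesgue_integral_def)
qed



lemma W_meas:
  fixes M :: "real measure" and w :: "real \<Rightarrow> real"
  assumes sets: "sets M = sets borel" and sf: "sigma_finite_measure M"
    and w[measurable]: "w \<in> borel_measurable borel"
  shows "(\<lambda>t. \<integral>h. indicator {h. t \<le> \<bar>h\<bar> \<and> \<bar>h\<bar> < R} h * w h \<partial>M) \<in> borel_measurable lborel"
proof -
  interpret sigma_finite_measure M by (rule sf)
  have measM: "measurable (lborel \<Otimes>\<^sub>M M) = measurable (borel \<Otimes>\<^sub>M borel)"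
    using sets by (auto intro!: measurable_cong_sets sets_pair_measure_cong)
  have "(\<lambda>(t,h). indicator {h. t \<le> \<bar>h\<bar> \<and> \<bar>h\<bar> < R} h * w h) \<in> borel_measurable (lborel \<Otimes>\<^sub>M M)"
    unfolding measM by measurable
  then show ?thesis by (rule borel_measurable_lebesgue_integral)
qed

lemma fubini_layer_int:
  fixes M :: "real measure" and g w :: "real \<Rightarrow> real" and R B :: real
  assumes sets: "sets M = sets borel" and sf: "sigma_finite_measure M"
    and g[measurable]: "g \<in> borel_measurable borel" and gb: "\<And>t. 0 \<le> t \<Longrightarrow> \<bar>g t\<bar> \<le> B * t"
    and w[measurable]: "w \<in> borel_measurable borel" and wnn: "\<And>h. 0 \<le> w h"
    and Wint: "integrable lborel (\<lambda>t. indicator {0..R} t * t * (\<integral>h. indicator {h. t \<le> \<bar>h\<bar> \<and> \<bar>h\<bar> < R} h * w h \<partial>M))"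
  shows "integrable lborel (\<lambda>t. g t * indicator {0..R} t * (\<integral>h. indicator {h. t \<le> \<bar>h\<bar> \<and> \<bar>h\<bar> < R} h * w h \<partial>M))"
proof (rule Bochner_Integration.integrable_bound)
  have B0: "0 \<le> B" using gb[of 1] by simp
  show "integrable lborel (\<lambda>t. B * (indicator {0..R} t * t * (\<integral>h. indicator {h. t \<le> \<bar>h\<bar> \<and> \<bar>h\<bar> < R} h * w h \<partial>M)))"
    using Wint by (rule integrable_mult_right)
  show "(\<lambda>t. g t * indicator {0..R} t * (\<integral>h. indicator {h. t \<le> \<bar>h\<bar> \<and> \<bar>h\<bar> < R} h * w h \<partial>M)) \<in> borel_measurable lborel"
    using W_meas[OF sets sf w] by measurable
  show "AE t in lborel. norm (g t * indicator {0..R} t * (\<integral>h. indicator {h. t \<le> \<bar>h\<bar> \<and> \<bar>h\<bar> < R} h * w h \<partial>M))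
      \<le> norm (B * (indicator {0..R} t * t * (\<integral>h. indicator {h. t \<le> \<bar>h\<bar> \<and> \<bar>h\<bar> < R} h * w h \<partial>M)))"
  proof (intro AE_I2)
    fix t :: real
    have Wnn: "0 \<le> (\<integral>h. indicator {h. t \<le> \<bar>h\<bar> \<and> \<bar>h\<bar> < R} h * w h \<partial>M)"
      by (intro integral_nonneg_AE) (auto simp: wnn)
    show "norm (g t * indicator {0..R} t * (\<integral>h. indicator {h. t \<le> \<bar>h\<bar> \<and> \<bar>h\<bar> < R} h * w h \<partial>M))
      \<le> norm (B * (indicator {0..R} t * t * (\<integral>h. indicator {h. t \<le> \<bar>h\<bar> \<and> \<bar>h\<bar> < R} h * w h \<partial>M)))"
      using Wnn gb[of t] B0
      by (auto simp: abs_mult mult.assoc[symmetric] split: split_indicator intro!: mult_right_mono)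
  qed
qed

lemma Q_repr:
  fixes Q :: "real measure" and f f' f'' :: "real \<Rightarrow> real" and x R F B :: real
  assumes Qp: "prob_space Q" and sets: "sets Q = sets borel" and symmQ: "distr Q borel uminus = Q"
    and df: "\<And>x. (f has_real_derivative f' x) (at x)"
    and df': "\<And>x. (f' has_real_derivative f'' x) (at x)"
    and fb: "\<And>y. \<bar>f y\<bar> \<le> F" and f''b: "\<And>y. \<bar>f'' y\<bar> \<le> B" and R: "R > 0"
  shows "(LINT h|Q. f (x + h) - f x)
       = (\<integral>t. (f' (x + t) - f' (x - t)) / 2 * indicator {0..R} t * measure Q {h. t \<le> \<bar>h\<bar> \<and> \<bar>h\<bar> < R} \<partial>lborel)
         + (\<integral>h. indicator {h. R \<le> \<bar>h\<bar>} h * ((f (x + h) + f (x - h)) / 2 - f x) \<partial>Q)"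
    and "integrable lborel (\<lambda>t. (f' (x + t) - f' (x - t)) / 2 * indicator {0..R} t * measure Q {h. t \<le> \<bar>h\<bar> \<and> \<bar>h\<bar> < R})"
proof -
  interpret prob_space Q by (rule Qp)
  have spQ: "space Q = UNIV" using sets_eq_imp_space_eq[OF sets] by simp
  have mQ: "measurable Q N = measurable borel N" for N :: "'b measure"
    using sets by (intro measurable_cong_sets) auto
  have cf: "continuous_on UNIV f"
    using df by (intro continuous_at_imp_continuous_on) (auto intro: DERIV_isCont)
  have cf': "continuous_on UNIV f'"
    using df' by (intro continuous_at_imp_continuous_on) (auto intro: DERIV_isCont)
  have [measurable]: "f \<in> borel_measurable borel" "f' \<in> borel_measurable borel"
    using cf cf' by (auto intro: borel_measurable_continuous_onI)
  define G where "G = (\<lambda>h. (f (x + h) + f (x - h)) / 2 - f x)"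
  define g where "g = (\<lambda>t. (f' (x + t) - f' (x - t)) / 2)"
  have [measurable]: "G \<in> borel_measurable borel" "g \<in> borel_measurable borel"
    unfolding G_def g_def by measurable
  have F0: "0 \<le> F" using fb[of 0] by simp
  have Gb: "\<bar>G h\<bar> \<le> 2 * F" for h
    using fb[of "x+h"] fb[of "x-h"] fb[of x] unfolding G_def by (simp add: abs_le_iff field_simps; linarith)
  have gb: "\<bar>g t\<bar> \<le> B * t" if "0 \<le> t" for t
  proof -
    have "\<bar>f' (x + t) - f' (x - t)\<bar> \<le> B * \<bar>(x + t) - (x - t)\<bar>"
      by (rule lip_from_deriv[OF df' f''b])
    then show ?thesis using that unfolding g_def by simp
  qed
  have intb: "integrable Q \<phi>" if "\<phi> \<in> borel_measurable borel" "\<And>h. \<bar>\<phi> h\<bar> \<le> C" for \<phi> :: "real \<Rightarrow> real" and C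
    by (rule integrable_const_bound[where B=C]) (use that in \<open>auto simp: mQ\<close>)
  have fd: "\<bar>f (x + h) - f x\<bar> \<le> 2*F" "\<bar>f (x - h) - f x\<bar> \<le> 2*F" for h
    using fb[of "x+h"] fb[of "x-h"] fb[of x] by (auto simp: abs_le_iff)
  have i1: "integrable Q (\<lambda>h. f (x + h) - f x)"
    by (rule intb[of _ "2*F"]) (use fd in auto)
  have i2: "integrable Q (\<lambda>h. f (x - h) - f x)"
    by (rule intb[of _ "2*F"]) (use fd in auto)
  have sym: "(LINT h|Q. f (x + h) - f x) = (LINT h|Q. f (x - h) - f x)"
  proof -
    have "(LINT h|Q. f (x + h) - f x) = (LINT h|distr Q borel uminus. f (x + h) - f x)"
      by (simp add: symmQ)
    also have "\<dots> = (LINT h|Q. f (x + - h) - f x)"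
      by (rule integral_distr) (auto simp: mQ)
    finally show ?thesis by simp
  qed
  have "(LINT h|Q. f (x + h) - f x) = ((LINT h|Q. f (x + h) - f x) + (LINT h|Q. f (x - h) - f x)) / 2"
    using sym by simp
  also have "\<dots> = (LINT h|Q. ((f (x + h) - f x) + (f (x - h) - f x))) / 2"
    by (subst Bochner_Integration.integral_add[OF i1 i2]) simp
  also have "\<dots> = (LINT h|Q. ((f (x + h) - f x) + (f (x - h) - f x)) / 2)"
    by (rule integral_divide_zero[symmetric])
  also have "\<dots> = (LINT h|Q. G h)"
    unfolding G_def by (intro Bochner_Integration.integral_cong) (auto simp: field_simps)
  also have "\<dots> = (LINT h|Q. indicator {h. \<bar>h\<bar> < R} h * G h) + (LINT h|Q. indicator {h. R \<le> \<bar>h\<bar>} h * G h)"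
  proof (subst Bochner_Integration.integral_add[symmetric])
    show "integrable Q (\<lambda>h. indicator {h. \<bar>h\<bar> < R} h * G h)"
      by (rule intb[of _ "2*F"]) (use Gb F0 in \<open>auto split: split_indicator\<close>)
    show "integrable Q (\<lambda>h. indicator {h. R \<le> \<bar>h\<bar>} h * G h)"
      by (rule intb[of _ "2*F"]) (use Gb F0 in \<open>auto split: split_indicator\<close>)
  qed (auto intro!: Bochner_Integration.integral_cong split: split_indicator)
  finally have eq1: "(LINT h|Q. f (x + h) - f x) = (LINT h|Q. indicator {h. \<bar>h\<bar> < R} h * G h) + (LINT h|Q. indicator {h. R \<le> \<bar>h\<bar>} h * G h)" .
  have eq2: "(LINT h|Q. indicator {h. \<bar>h\<bar> < R} h * G h)
      = (\<integral>h. indicator {h. \<bar>h\<bar> < R} h * (LBINT t:{0..\<bar>h\<bar>}. g t) * (\<lambda>_. 1) h \<partial>Q)"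
  proof (intro Bochner_Integration.integral_cong refl)
    fix h :: real
    have "(LBINT t:{0..\<bar>h\<bar>}. g t) = (f (x + \<bar>h\<bar>) + f (x - \<bar>h\<bar>)) / 2 - f x"
      unfolding g_def by (rule Gh_FTC[OF df df']) simp
    also have "\<dots> = G h" unfolding G_def by (cases "0 \<le> h") auto
    finally show "indicator {h. \<bar>h\<bar> < R} h * G h = indicator {h. \<bar>h\<bar> < R} h * (LBINT t:{0..\<bar>h\<bar>}. g t) * (\<lambda>_. 1) h"
      by simp
  qed
  have wint: "integrable Q (\<lambda>h. indicator {h. t \<le> \<bar>h\<bar> \<and> \<bar>h\<bar> < R} h * (\<lambda>_. 1::real) h)" for t
    by (rule intb[of _ 1]) (auto split: split_indicator)
  have Weq: "(\<integral>h. indicator {h. t \<le> \<bar>h\<bar> \<and> \<bar>h\<bar> < R} h * (\<lambda>_. 1::real) h \<partial>Q) = measure Q {h. t \<le> \<bar>h\<bar> \<and> \<bar>h\<bar> < R}" for t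
    by (simp add: spQ)
  have Wint: "integrable lborel (\<lambda>t. indicator {0..R} t * t * (\<integral>h. indicator {h. t \<le> \<bar>h\<bar> \<and> \<bar>h\<bar> < R} h * (\<lambda>_. 1::real) h \<partial>Q))"
  proof (rule Bochner_Integration.integrable_bound)
    show "integrable lborel (\<lambda>t. R * indicator {0..R} t)"
      using borel_integrable_atLeastAtMost[of 0 R "\<lambda>_. R"] by simp
    show "(\<lambda>t. indicator {0..R} t * t * (\<integral>h. indicator {h. t \<le> \<bar>h\<bar> \<and> \<bar>h\<bar> < R} h * (\<lambda>_. 1::real) h \<partial>Q)) \<in> borel_measurable lborel"
      using W_meas[OF sets prob_space_imp_sigma_finite[OF Qp], of "\<lambda>_. 1" R] by measurable
    show "AE t in lborel. norm (indicator {0..R} t * t * (\<integral>h. indicator {h. t \<le> \<bar>h\<bar> \<and> \<bar>h\<bar> < R} h * (\<lambda>_. 1::real) h \<partial>Q)) \<le> norm (R * indicator {0..R} t)"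
    proof (intro AE_I2)
      fix t
      have m0: "0 \<le> measure Q {h. t \<le> \<bar>h\<bar> \<and> \<bar>h\<bar> < R}" "measure Q {h. t \<le> \<bar>h\<bar> \<and> \<bar>h\<bar> < R} \<le> 1" by auto
      have "0 \<le> t \<Longrightarrow> t \<le> R \<Longrightarrow> t * measure Q {h. t \<le> \<bar>h\<bar> \<and> \<bar>h\<bar> < R} \<le> R"
        using mult_mono[of t R "measure Q {h. t \<le> \<bar>h\<bar> \<and> \<bar>h\<bar> < R}" 1] m0 by simp
      with m0 show "norm (indicator {0..R} t * t * (\<integral>h. indicator {h. t \<le> \<bar>h\<bar> \<and> \<bar>h\<bar> < R} h * (\<lambda>_. 1::real) h \<partial>Q)) \<le> norm (R * indicator {0..R} t)"
        unfolding Weq using R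
        by (auto split: split_indicator simp: abs_mult intro!: mult_mono)
    qed
  qed
  have "(\<integral>h. indicator {h. \<bar>h\<bar> < R} h * (LBINT t:{0..\<bar>h\<bar>}. g t) * (\<lambda>_. 1) h \<partial>Q)
      = (\<integral>t. g t * indicator {0..R} t * (\<integral>h. indicator {h. t \<le> \<bar>h\<bar> \<and> \<bar>h\<bar> < R} h * (\<lambda>_. 1::real) h \<partial>Q) \<partial>lborel)"
    by (rule fubini_layer[OF sets prob_space_imp_sigma_finite[OF Qp] R _ gb _ _ wint Wint]) auto
  also have "\<dots> = (\<integral>t. g t * indicator {0..R} t * measure Q {h. t \<le> \<bar>h\<bar> \<and> \<bar>h\<bar> < R} \<partial>lborel)"
    unfolding Weq ..
  finally have eq3: "(\<integral>h. indicator {h. \<bar>h\<bar> < R} h * (LBINT t:{0..\<bar>h\<bar>}. g t) * (\<lambda>_. 1) h \<partial>Q) = (\<integral>t. g t * indicator {0..R} t * measure Q {h. t \<le> \<bar>h\<bar> \<and> \<bar>h\<bar> < R} \<partial>lborel)" .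
  show "(LINT h|Q. f (x + h) - f x)
       = (\<integral>t. (f' (x + t) - f' (x - t)) / 2 * indicator {0..R} t * measure Q {h. t \<le> \<bar>h\<bar> \<and> \<bar>h\<bar> < R} \<partial>lborel)
         + (\<integral>h. indicator {h. R \<le> \<bar>h\<bar>} h * ((f (x + h) + f (x - h)) / 2 - f x) \<partial>Q)"
    using eq1 eq2 eq3 unfolding g_def G_def by simp
  show "integrable lborel (\<lambda>t. (f' (x + t) - f' (x - t)) / 2 * indicator {0..R} t * measure Q {h. t \<le> \<bar>h\<bar> \<and> \<bar>h\<bar> < R})"
    using fubini_layer_int[OF sets prob_space_imp_sigma_finite[OF Qp] _ gb _ _ Wint]
    unfolding Weq g_def by auto
qed



lemma sq_powr: fixes z a :: real assumes "z \<noteq> 0"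
  shows "z\<^sup>2 * \<bar>z\<bar> powr (-(1+a)) = \<bar>z\<bar> powr (1 - a)"
proof -
  have "z\<^sup>2 = \<bar>z\<bar> powr 2" using assms by (simp add: powr_numeral)
  moreover have "\<bar>z\<bar> powr (1 - a) = \<bar>z\<bar> powr 2 * \<bar>z\<bar> powr (-(1+a))"
    using powr_add[of "\<bar>z\<bar>" 2 "-(1+a)"] by simp
  ultimately show ?thesis by simp
qed

lemma t_powr: fixes t a :: real assumes "0 \<le> t"
  shows "t * t powr (-a) = t powr (1 - a)"
  using assms powr_add[of t 1 "-a"] by (cases "t = 0") auto

lemma nu_repr:
  fixes f f' f'' :: "real \<Rightarrow> real" and x R F B \<alpha> :: real
  assumes df: "\<And>x. (f has_real_derivative f' x) (at x)"
    and df': "\<And>x. (f' has_real_derivative f'' x) (at x)"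
    and fb: "\<And>y. \<bar>f y\<bar> \<le> F" and f''b: "\<And>y. \<bar>f'' y\<bar> \<le> B" and R: "R > 0"
    and alpha: "0 < \<alpha>" "\<alpha> < 2"
  shows "(LINT z|lborel. (f (x + z) - f x - f' x * z * (if \<bar>z\<bar> \<le> 1 then 1 else 0)) * \<bar>z\<bar> powr (-(1 + \<alpha>)))
     = (\<integral>t. (f' (x + t) - f' (x - t)) / 2 * indicator {0..R} t * (2 / \<alpha> * (t powr (-\<alpha>) - R powr (-\<alpha>))) \<partial>lborel)
       + (\<integral>h. indicator {h. R \<le> \<bar>h\<bar>} h * ((f (x + h) + f (x - h)) / 2 - f x) * \<bar>h\<bar> powr (-(1 + \<alpha>)) \<partial>lborel)"
    and "integrable lborel (\<lambda>t. (f' (x + t) - f' (x - t)) / 2 * indicator {0..R} t * (2 / \<alpha> * (t powr (-\<alpha>) - R powr (-\<alpha>))))"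
proof -
  have cf: "continuous_on UNIV f"
    using df by (intro continuous_at_imp_continuous_on) (auto intro: DERIV_isCont)
  have cf': "continuous_on UNIV f'"
    using df' by (intro continuous_at_imp_continuous_on) (auto intro: DERIV_isCont)
  have [measurable]: "f \<in> borel_measurable borel" "f' \<in> borel_measurable borel"
    using cf cf' by (auto intro: borel_measurable_continuous_onI)
  define w where "w = (\<lambda>h::real. \<bar>h\<bar> powr (-(1 + \<alpha>)))"
  define G where "G = (\<lambda>h. (f (x + h) + f (x - h)) / 2 - f x)"
  define g where "g = (\<lambda>t. (f' (x + t) - f' (x - t)) / 2)"
  define I where "I = (\<lambda>z. (f (x + z) - f x - f' x * z * (if \<bar>z\<bar> \<le> 1 then 1 else 0)) * \<bar>z\<bar> powr (-(1 + \<alpha>)))"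
  have [measurable]: "G \<in> borel_measurable borel" "g \<in> borel_measurable borel" "w \<in> borel_measurable borel"
    "I \<in> borel_measurable borel"
    unfolding G_def g_def w_def I_def by measurable
  have wnn: "0 \<le> w h" for h unfolding w_def by simp
  have F0: "0 \<le> F" using fb[of 0] by simp
  have B0: "0 \<le> B" using f''b[of 0] by simp
  have gb: "\<bar>g t\<bar> \<le> B * t" if "0 \<le> t" for t
  proof -
    have "\<bar>f' (x + t) - f' (x - t)\<bar> \<le> B * \<bar>(x + t) - (x - t)\<bar>"
      by (rule lip_from_deriv[OF df' f''b])
    then show ?thesis using that unfolding g_def by simp
  qed
  define m where "m = (\<lambda>z. B * (indicator {-1..1} z * \<bar>z\<bar> powr (1 - \<alpha>)) + 2 * F * (indicator {z. 1 \<le> \<bar>z\<bar>} z * \<bar>z\<bar> powr (-(1 + \<alpha>))))"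
  have mint: "integrable lborel m"
  proof -
    have "integrable lborel (\<lambda>z. indicator {-1..1} z * \<bar>z\<bar> powr (1 - \<alpha>))"
      using hbi_powr_0_sym[of "1 - \<alpha>" 1] alpha by (auto simp: has_bochner_integral_iff)
    moreover have "integrable lborel (\<lambda>z. indicator {z. 1 \<le> \<bar>z\<bar>} z * \<bar>z\<bar> powr (-(1 + \<alpha>)))"
      using hbi_powr_inf_sym[of "-(1 + \<alpha>)" 1] alpha by (auto simp: has_bochner_integral_iff)
    ultimately show ?thesis unfolding m_def by auto
  qed
  have Ib: "\<bar>I z\<bar> \<le> m z" for z
  proof (cases "z = 0")
    case True then show ?thesis using B0 F0 by (simp add: I_def m_def)
  next
    case z: False
    show ?thesis
    proof (cases "\<bar>z\<bar> \<le> 1")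
      case True
      have "\<bar>I z\<bar> = \<bar>f (x + z) - f x - f' x * z\<bar> * \<bar>z\<bar> powr (-(1 + \<alpha>))"
        using True by (simp add: I_def abs_mult)
      also have "\<dots> \<le> (B * z\<^sup>2) * \<bar>z\<bar> powr (-(1 + \<alpha>))"
        by (intro mult_right_mono taylor_bound[OF df df' f''b]) simp
      also have "\<dots> = B * \<bar>z\<bar> powr (1 - \<alpha>)"
        using sq_powr[OF z, of \<alpha>] by (simp add: mult.assoc)
      also have "\<dots> \<le> m z" using True F0 by (auto simp: m_def split: split_indicator)
      finally show ?thesis .
    next
      case False
      have "\<bar>I z\<bar> = \<bar>f (x + z) - f x\<bar> * \<bar>z\<bar> powr (-(1 + \<alpha>))"
        using False by (simp add: I_def abs_mult)
      also have "\<dots> \<le> (2 * F) * \<bar>z\<bar> powr (-(1 + \<alpha>))"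
        using fb[of "x+z"] fb[of x] by (intro mult_right_mono) (auto simp: abs_le_iff)
      also have "\<dots> \<le> m z" using False B0 by (auto simp: m_def split: split_indicator)
      finally show ?thesis .
    qed
  qed
  have Iint: "integrable lborel I"
    by (rule Bochner_Integration.integrable_bound[OF mint]) (auto intro!: AE_I2 order_trans[OF Ib abs_ge_self])
  have Iint': "integrable lborel (\<lambda>z. I (- z))"
  proof -
    have "integrable (distr lborel borel uminus) I" by (simp add: lborel_distr_uminus Iint)
    then show ?thesis by (subst (asm) integrable_distr_eq) auto
  qed
  have Irefl: "(LINT z|lborel. I z) = (LINT z|lborel. I (- z))"
  proof -
    have "(LINT z|lborel. I z) = (LINT z|distr lborel borel uminus. I z)" by (simp add: lborel_distr_uminus)
    also have "\<dots> = (LINT z|lborel. I (- z))" by (rule integral_distr) auto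
    finally show ?thesis .
  qed
  have GwI: "G z * w z = (I z + I (- z)) / 2" for z
    unfolding G_def w_def I_def by (simp add: field_simps)
  have Gwint: "integrable lborel (\<lambda>z. G z * w z)"
    unfolding GwI using Iint Iint' by auto
  have "(LINT z|lborel. I z) = ((LINT z|lborel. I z) + (LINT z|lborel. I (- z))) / 2"
    using Irefl by simp
  also have "\<dots> = (LINT z|lborel. (I z + I (- z)) / 2)"
    using Iint Iint' by simp
  also have "\<dots> = (LINT z|lborel. G z * w z)" unfolding GwI ..
  also have "\<dots> = (LINT h|lborel. indicator {h. \<bar>h\<bar> < R} h * G h * w h) + (LINT h|lborel. indicator {h. R \<le> \<bar>h\<bar>} h * G h * w h)"
  proof (subst Bochner_Integration.integral_add[symmetric])
    show "integrable lborel (\<lambda>h. indicator {h. \<bar>h\<bar> < R} h * G h * w h)"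
      using integrable_mult_indicator[OF _ Gwint, of "{h. \<bar>h\<bar> < R}"] by (simp add: mult.assoc)
    show "integrable lborel (\<lambda>h. indicator {h. R \<le> \<bar>h\<bar>} h * G h * w h)"
      using integrable_mult_indicator[OF _ Gwint, of "{h. R \<le> \<bar>h\<bar>}"] by (simp add: mult.assoc)
  qed (auto intro!: Bochner_Integration.integral_cong split: split_indicator)
  finally have eq1: "(LINT z|lborel. I z) = (LINT h|lborel. indicator {h. \<bar>h\<bar> < R} h * G h * w h) + (LINT h|lborel. indicator {h. R \<le> \<bar>h\<bar>} h * G h * w h)" .
  have eq2: "(LINT h|lborel. indicator {h. \<bar>h\<bar> < R} h * G h * w h)
      = (\<integral>h. indicator {h. \<bar>h\<bar> < R} h * (LBINT t:{0..\<bar>h\<bar>}. g t) * w h \<partial>lborel)"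
  proof (intro Bochner_Integration.integral_cong refl)
    fix h :: real
    have "(LBINT t:{0..\<bar>h\<bar>}. g t) = (f (x + \<bar>h\<bar>) + f (x - \<bar>h\<bar>)) / 2 - f x"
      unfolding g_def by (rule Gh_FTC[OF df df']) simp
    also have "\<dots> = G h" unfolding G_def by (cases "0 \<le> h") auto
    finally show "indicator {h. \<bar>h\<bar> < R} h * G h * w h = indicator {h. \<bar>h\<bar> < R} h * (LBINT t:{0..\<bar>h\<bar>}. g t) * w h"
      by simp
  qed
  have tailw: "has_bochner_integral lborel (\<lambda>h. indicator {h. t \<le> \<bar>h\<bar>} h * w h) (2 / \<alpha> * t powr (-\<alpha>))" if "0 < t" for t
    using hbi_powr_inf_sym[of "-(1 + \<alpha>)" t] alpha that unfolding w_def by (simp add: field_simps)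
  have wint: "integrable lborel (\<lambda>h. indicator {h. t \<le> \<bar>h\<bar> \<and> \<bar>h\<bar> < R} h * w h)" if "0 < t" for t
  proof (rule Bochner_Integration.integrable_bound)
    show "integrable lborel (\<lambda>h. indicator {h. t \<le> \<bar>h\<bar>} h * w h)"
      using tailw[OF that] by (simp add: has_bochner_integral_iff)
  qed (auto simp: wnn split: split_indicator)
  have Weq: "(\<integral>h. indicator {h. t \<le> \<bar>h\<bar> \<and> \<bar>h\<bar> < R} h * w h \<partial>lborel) = 2 / \<alpha> * (t powr (-\<alpha>) - R powr (-\<alpha>))"
    if "0 < t" "t \<le> R" for t
  proof -
    have "(\<integral>h. indicator {h. t \<le> \<bar>h\<bar> \<and> \<bar>h\<bar> < R} h * w h \<partial>lborel)
        = (\<integral>h. indicator {h. t \<le> \<bar>h\<bar>} h * w h - indicator {h. R \<le> \<bar>h\<bar>} h * w h \<partial>lborel)"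
      using that by (intro Bochner_Integration.integral_cong) (auto split: split_indicator)
    also have "\<dots> = 2 / \<alpha> * t powr (-\<alpha>) - 2 / \<alpha> * R powr (-\<alpha>)"
      using tailw[of t] tailw[of R] that R
      by (subst Bochner_Integration.integral_diff) (auto simp: has_bochner_integral_iff)
    finally show ?thesis by (simp add: algebra_simps)
  qed
  define W where "W = (\<lambda>t. \<integral>h. indicator {h. t \<le> \<bar>h\<bar> \<and> \<bar>h\<bar> < R} h * w h \<partial>lborel)"
  have Wint: "integrable lborel (\<lambda>t. indicator {0..R} t * t * W t)"
  proof -
    have i1: "integrable lborel (\<lambda>t. indicator {0..R} t * t powr (1 - \<alpha>))"
      using hbi_powr_0[of "1 - \<alpha>" R] alpha R by (auto simp: has_bochner_integral_iff)
    have i2: "integrable lborel (\<lambda>t. indicator {0..R} t * t powr 1)"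
      using hbi_powr_0[of 1 R] R by (auto simp: has_bochner_integral_iff)
    have "integrable lborel (\<lambda>t. 2 / \<alpha> * (indicator {0..R} t * t powr (1 - \<alpha>)) - 2 / \<alpha> * R powr (-\<alpha>) * (indicator {0..R} t * t powr 1))"
      using i1 i2 by auto
    then show ?thesis
    proof (rule Bochner_Integration.integrable_cong[OF refl, THEN iffD1, rotated])
      fix t :: real
      show "2 / \<alpha> * (indicator {0..R} t * t powr (1 - \<alpha>)) - 2 / \<alpha> * R powr (-\<alpha>) * (indicator {0..R} t * t powr 1)
          = indicator {0..R} t * t * W t"
      proof (cases "0 < t \<and> t \<le> R")
        case True
        then show ?thesis unfolding W_def Weq[OF conjunct1[OF True] conjunct2[OF True]]
          using t_powr[of t \<alpha>] by (auto simp: algebra_simps)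
      next
        case False
        then show ?thesis by (cases "t = 0") (auto split: split_indicator)
      qed
    qed
  qed
  have eq3: "(\<integral>h. indicator {h. \<bar>h\<bar> < R} h * (LBINT t:{0..\<bar>h\<bar>}. g t) * w h \<partial>lborel)
     = (\<integral>t. g t * indicator {0..R} t * W t \<partial>lborel)"
    unfolding W_def
    by (rule fubini_layer[OF sets_lborel lborel.sigma_finite_measure_axioms R _ gb _ wnn wint]) (use Wint in \<open>auto simp: W_def\<close>)
  have g0: "g 0 = 0" unfolding g_def by simp
  have gW: "g t * indicator {0..R} t * W t = g t * indicator {0..R} t * (2 / \<alpha> * (t powr (-\<alpha>) - R powr (-\<alpha>)))" for t
    using Weq[of t] g0 by (cases "0 < t") (auto simp: W_def split: split_indicator)
  show "(LINT z|lborel. (f (x + z) - f x - f' x * z * (if \<bar>z\<bar> \<le> 1 then 1 else 0)) * \<bar>z\<bar> powr (-(1 + \<alpha>)))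
     = (\<integral>t. (f' (x + t) - f' (x - t)) / 2 * indicator {0..R} t * (2 / \<alpha> * (t powr (-\<alpha>) - R powr (-\<alpha>))) \<partial>lborel)
       + (\<integral>h. indicator {h. R \<le> \<bar>h\<bar>} h * ((f (x + h) + f (x - h)) / 2 - f x) * \<bar>h\<bar> powr (-(1 + \<alpha>)) \<partial>lborel)"
    using eq1 eq2 eq3 unfolding gW I_def[symmetric] by (simp add: g_def G_def w_def)
  show "integrable lborel (\<lambda>t. (f' (x + t) - f' (x - t)) / 2 * indicator {0..R} t * (2 / \<alpha> * (t powr (-\<alpha>) - R powr (-\<alpha>))))"
  proof -
    have "integrable lborel (\<lambda>t. g t * indicator {0..R} t * W t)"
      unfolding W_def
      by (rule fubini_layer_int[OF sets_lborel lborel.sigma_finite_measure_axioms _ gb _ wnn]) (use Wint in \<open>auto simp: W_def\<close>)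
    then show ?thesis unfolding gW by (simp add: g_def)
  qed
qed



lemma key_bound:
  fixes P :: "real \<Rightarrow> real measure" and \<sigma> f f' f'' :: "real \<Rightarrow> real"
    and \<alpha> \<eta> K R \<epsilon> u0 S F B x :: real
  assumes alpha: "0 < \<alpha>" "\<alpha> < 2" and eta: "0 < \<eta>"
    and prob: "\<And>x. prob_space (P x)"
    and borel: "\<And>x. sets (P x) = sets borel"
    and symm: "\<And>x. distr (P x) borel uminus = P x"
    and sig0: "\<And>x. 0 \<le> \<sigma> x" and sigS: "\<And>x. \<sigma> x \<le> S"
    and df: "\<And>x. (f has_real_derivative f' x) (at x)"
    and df': "\<And>x. (f' has_real_derivative f'' x) (at x)"
    and fb: "\<And>y. \<bar>f y\<bar> \<le> F" and f''b: "\<And>y. \<bar>f'' y\<bar> \<le> B"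
    and R: "0 < R" and eps: "0 < \<epsilon>" and u0: "0 < u0"
    and tb: "\<And>u x. u0 \<le> u \<Longrightarrow> \<bar>u powr \<alpha> * measure (P x) {h. u \<le> \<bar>h\<bar>} - 2 * \<sigma> x / \<alpha>\<bar> < \<epsilon>"
    and K: "0 < K" and Rc: "u0 \<le> R * K powr (\<eta> / \<alpha>)"
  shows "\<bar>K powr \<eta> * (LINT h|distr (P x) borel (\<lambda>h. h / K powr (\<eta> / \<alpha>)). f (x + h) - f x)
          - \<sigma> x * (LINT z|lborel. (f (x + z) - f x - f' x * z * (if \<bar>z\<bar> \<le> 1 then 1 else 0)) * \<bar>z\<bar> powr (-(1 + \<alpha>)))\<bar>
     \<le> B * K powr \<eta> * (u0 / K powr (\<eta> / \<alpha>)) powr 2 / 2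
        + B * (2 * S / \<alpha>) * (u0 / K powr (\<eta> / \<alpha>)) powr (2 - \<alpha>) / (2 - \<alpha>)
        + \<epsilon> * (B * R powr (2 - \<alpha>) / (2 - \<alpha>) + B * R powr (-\<alpha>) * R powr 2 / 2)
        + R powr (-\<alpha>) * (2 * F * (\<epsilon> + 2 * S / \<alpha>) + 4 * S * F / \<alpha>)"
proof -
  define c where "c = K powr (\<eta> / \<alpha>)"
  have c0: "0 < c" unfolding c_def using K by simp
  have ca: "c powr \<alpha> = K powr \<eta>" unfolding c_def using alpha by (simp add: powr_powr)
  define a where "a = u0 / c"
  have a0: "0 < a" unfolding a_def using u0 c0 by simp
  define Q where "Q = distr (P x) borel (\<lambda>h. h / c)"
  have mP: "measurable (P x) N = measurable borel N" for N :: "'b measure"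
    using borel by (intro measurable_cong_sets) auto
  have spP: "space (P x) = UNIV" using sets_eq_imp_space_eq[OF borel[of x]] by simp
  have [measurable]: "(\<lambda>h::real. h / c) \<in> measurable (P x) borel" unfolding mP by measurable
  have Qp: "prob_space Q" unfolding Q_def by (rule prob_space.prob_space_distr[OF prob]) simp
  interpret Qps: prob_space Q by (rule Qp)
  have Qsets: "sets Q = sets borel" unfolding Q_def by simp
  have symmQ: "distr Q borel uminus = Q"
  proof -
    have "distr Q borel uminus = distr (P x) borel (uminus \<circ> (\<lambda>h. h / c))"
      unfolding Q_def by (subst distr_distr) auto
    also have "\<dots> = distr (P x) borel ((\<lambda>h. h / c) \<circ> uminus)"
      by (rule arg_cong[where f="distr (P x) borel"]) (auto simp: fun_eq_iff)
    also have "\<dots> = distr (distr (P x) borel uminus) borel (\<lambda>h. h / c)"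
      by (subst distr_distr) (auto simp: mP)
    also have "\<dots> = Q" unfolding symm Q_def ..
    finally show ?thesis .
  qed
  have F0: "0 \<le> F" using fb[of 0] by simp
  have B0: "0 \<le> B" using f''b[of 0] by simp
  have S0: "0 \<le> S" using sig0[of 0] sigS[of 0] by simp
  define g where "g = (\<lambda>t. (f' (x + t) - f' (x - t)) / 2)"
  have gb: "\<bar>g t\<bar> \<le> B * t" if "0 \<le> t" for t
  proof -
    have "\<bar>f' (x + t) - f' (x - t)\<bar> \<le> B * \<bar>(x + t) - (x - t)\<bar>"
      by (rule lip_from_deriv[OF df' f''b])
    then show ?thesis using that unfolding g_def by simp
  qed
  define V where "V = (\<lambda>s. K powr \<eta> * measure Q {h. s \<le> \<bar>h\<bar>})"
  define Dd where "Dd = (\<lambda>s. V s - \<sigma> x * (2 / \<alpha> * s powr (-\<alpha>)))"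
  have mQ: "measure Q {h. s \<le> \<bar>h\<bar>} = measure (P x) {h. s * c \<le> \<bar>h\<bar>}" for s
  proof -
    have "measure Q {h. s \<le> \<bar>h\<bar>} = measure (P x) ((\<lambda>h. h / c) -` {h. s \<le> \<bar>h\<bar>} \<inter> space (P x))"
      unfolding Q_def by (rule measure_distr) auto
    also have "(\<lambda>h. h / c) -` {h. s \<le> \<bar>h\<bar>} \<inter> space (P x) = {h. s * c \<le> \<bar>h\<bar>}"
      using c0 by (auto simp: spP field_simps)
    finally show ?thesis .
  qed
  have Dform: "Dd s = s powr (-\<alpha>) * ((s * c) powr \<alpha> * measure (P x) {h. s * c \<le> \<bar>h\<bar>} - 2 * \<sigma> x / \<alpha>)" if "0 < s" for s
  proof -
    have "s powr (-\<alpha>) * (s * c) powr \<alpha> = c powr \<alpha>"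
      using that by (simp add: powr_mult powr_minus field_simps)
    then show ?thesis unfolding Dd_def V_def mQ ca[symmetric]
      by (simp add: algebra_simps)
  qed
  have Dgood: "\<bar>Dd s\<bar> \<le> \<epsilon> * s powr (-\<alpha>)" if "0 < s" "u0 \<le> s * c" for s
  proof -
    have "\<bar>Dd s\<bar> = s powr (-\<alpha>) * \<bar>(s * c) powr \<alpha> * measure (P x) {h. s * c \<le> \<bar>h\<bar>} - 2 * \<sigma> x / \<alpha>\<bar>"
      using Dform[OF that(1)] by (simp add: abs_mult)
    also have "\<dots> \<le> s powr (-\<alpha>) * \<epsilon>"
      using tb[OF that(2), of x] by (intro mult_left_mono) auto
    finally show ?thesis by (simp add: mult.commute)
  qed
  have Dsmall: "\<bar>Dd s\<bar> \<le> K powr \<eta> + S * (2 / \<alpha>) * s powr (-\<alpha>)" for s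
  proof -
    have "0 \<le> V s" "V s \<le> K powr \<eta>" unfolding V_def by (auto intro: mult_left_le)
    moreover have "0 \<le> \<sigma> x * (2 / \<alpha> * s powr (-\<alpha>))" using sig0[of x] alpha by simp
    moreover have "\<sigma> x * (2 / \<alpha> * s powr (-\<alpha>)) \<le> S * (2 / \<alpha>) * s powr (-\<alpha>)"
      using mult_right_mono[OF sigS[of x], of "2 / \<alpha> * s powr (-\<alpha>)"] alpha by (simp add: mult.assoc)
    ultimately show ?thesis unfolding Dd_def by (simp add: abs_le_iff)
  qed
  note QR = Q_repr[OF Qp Qsets symmQ df df' fb f''b R, of x]
  note NR = nu_repr[OF df df' fb f''b R alpha, of x]
  define Wq where "Wq = (\<lambda>t. measure Q {h. t \<le> \<bar>h\<bar> \<and> \<bar>h\<bar> < R})"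
  define Tw where "Tw = (\<lambda>t::real. 2 / \<alpha> * (t powr (-\<alpha>) - R powr (-\<alpha>)))"
  define Tq where "Tq = (\<integral>h. indicator {h. R \<le> \<bar>h\<bar>} h * ((f (x + h) + f (x - h)) / 2 - f x) \<partial>Q)"
  define Tn where "Tn = (\<integral>h. indicator {h. R \<le> \<bar>h\<bar>} h * ((f (x + h) + f (x - h)) / 2 - f x) * \<bar>h\<bar> powr (-(1 + \<alpha>)) \<partial>lborel)"
  define J where "J = (\<lambda>t. g t * indicator {0..R} t * (Dd t - Dd R))"
  have WqV: "K powr \<eta> * Wq t - \<sigma> x * Tw t = Dd t - Dd R" if "0 \<le> t" "t \<le> R" for t
  proof -
    have e: "{h. t \<le> \<bar>h\<bar> \<and> \<bar>h\<bar> < R} = {h. t \<le> \<bar>h\<bar>} - {h. R \<le> \<bar>h\<bar>}" by auto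
    have "Wq t = measure Q ({h. t \<le> \<bar>h\<bar>} - {h. R \<le> \<bar>h\<bar>})" unfolding Wq_def e ..
    also have "\<dots> = measure Q {h. t \<le> \<bar>h\<bar>} - measure Q {h. R \<le> \<bar>h\<bar>}"
    proof (rule Qps.finite_measure_Diff)
      show "{h. t \<le> \<bar>h\<bar>} \<in> sets Q" unfolding Qsets by measurable
      show "{h. R \<le> \<bar>h\<bar>} \<in> sets Q" unfolding Qsets by measurable
      show "{h. R \<le> \<bar>h\<bar>} \<subseteq> {h. t \<le> \<bar>h\<bar>}" using that by auto
    qed
    finally have WqE: "Wq t = measure Q {h. t \<le> \<bar>h\<bar>} - measure Q {h. R \<le> \<bar>h\<bar>}" .
    show ?thesis unfolding Dd_def V_def Tw_def WqE by (simp add: algebra_simps)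
  qed
  have i1: "integrable lborel (\<lambda>t. g t * indicator {0..R} t * Wq t)"
    using QR(2) unfolding g_def Wq_def .
  have i2: "integrable lborel (\<lambda>t. g t * indicator {0..R} t * Tw t)"
    using NR(2) unfolding g_def Tw_def .
  have Jeq: "K powr \<eta> * (g t * indicator {0..R} t * Wq t) - \<sigma> x * (g t * indicator {0..R} t * Tw t) = J t" for t
  proof (cases "0 \<le> t \<and> t \<le> R")
    case True
    have "K powr \<eta> * (g t * indicator {0..R} t * Wq t) - \<sigma> x * (g t * indicator {0..R} t * Tw t)
        = g t * indicator {0..R} t * (K powr \<eta> * Wq t - \<sigma> x * Tw t)" by (simp add: algebra_simps)
    also have "\<dots> = J t" unfolding J_def WqV[OF conjunct1[OF True] conjunct2[OF True]] ..
    finally show ?thesis .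
  next
    case False
    then show ?thesis unfolding J_def by (auto split: split_indicator)
  qed
  have Jint: "integrable lborel J"
  proof -
    have "integrable lborel (\<lambda>t. K powr \<eta> * (g t * indicator {0..R} t * Wq t) - \<sigma> x * (g t * indicator {0..R} t * Tw t))"
      using i1 i2 by auto
    then show ?thesis unfolding Jeq .
  qed
  have main_eq: "K powr \<eta> * (LINT h|Q. f (x + h) - f x)
      - \<sigma> x * (LINT z|lborel. (f (x + z) - f x - f' x * z * (if \<bar>z\<bar> \<le> 1 then 1 else 0)) * \<bar>z\<bar> powr (-(1 + \<alpha>)))
      = (LBINT t. J t) + (K powr \<eta> * Tq - \<sigma> x * Tn)"
  proof -
    have "K powr \<eta> * (LINT h|Q. f (x + h) - f x)
      - \<sigma> x * (LINT z|lborel. (f (x + z) - f x - f' x * z * (if \<bar>z\<bar> \<le> 1 then 1 else 0)) * \<bar>z\<bar> powr (-(1 + \<alpha>)))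
      = K powr \<eta> * ((LBINT t. g t * indicator {0..R} t * Wq t) + Tq) - \<sigma> x * ((LBINT t. g t * indicator {0..R} t * Tw t) + Tn)"
      using QR(1) NR(1) unfolding g_def Wq_def Tw_def Tq_def Tn_def by simp
    also have "\<dots> = ((LBINT t. K powr \<eta> * (g t * indicator {0..R} t * Wq t)) - (LBINT t. \<sigma> x * (g t * indicator {0..R} t * Tw t)))
        + (K powr \<eta> * Tq - \<sigma> x * Tn)"
      unfolding integral_mult_right_zero by (simp add: algebra_simps)
    also have "(LBINT t. K powr \<eta> * (g t * indicator {0..R} t * Wq t)) - (LBINT t. \<sigma> x * (g t * indicator {0..R} t * Tw t))
        = (LBINT t. K powr \<eta> * (g t * indicator {0..R} t * Wq t) - \<sigma> x * (g t * indicator {0..R} t * Tw t))"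
      using i1 i2 by (subst Bochner_Integration.integral_diff) auto
    also have "\<dots> = (LBINT t. J t)" unfolding Jeq ..
    finally show ?thesis .
  qed
  define m where "m = (\<lambda>t. (B * K powr \<eta>) * (indicator {0..a} t * t powr 1) + (B * (2 * S / \<alpha>)) * (indicator {0..a} t * t powr (1 - \<alpha>))
        + ((B * \<epsilon>) * (indicator {0..R} t * t powr (1 - \<alpha>)) + (B * \<epsilon> * R powr (-\<alpha>)) * (indicator {0..R} t * t powr 1)))"
  have hm: "has_bochner_integral lborel m
      (B * K powr \<eta> * (a powr 2 / 2) + B * (2 * S / \<alpha>) * (a powr (2 - \<alpha>) / (2 - \<alpha>))
       + (B * \<epsilon> * (R powr (2 - \<alpha>) / (2 - \<alpha>)) + B * \<epsilon> * R powr (-\<alpha>) * (R powr 2 / 2)))"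
  proof -
    have h1: "has_bochner_integral lborel (\<lambda>t. indicator {0..a} t * t powr 1) (a powr 2 / 2)"
      using hbi_powr_0[of 1 a] a0 by simp
    have h2: "has_bochner_integral lborel (\<lambda>t. indicator {0..a} t * t powr (1 - \<alpha>)) (a powr (2 - \<alpha>) / (2 - \<alpha>))"
      using hbi_powr_0[of "1 - \<alpha>" a] a0 alpha by (simp add: algebra_simps)
    have h3: "has_bochner_integral lborel (\<lambda>t. indicator {0..R} t * t powr 1) (R powr 2 / 2)"
      using hbi_powr_0[of 1 R] R by simp
    have h4: "has_bochner_integral lborel (\<lambda>t. indicator {0..R} t * t powr (1 - \<alpha>)) (R powr (2 - \<alpha>) / (2 - \<alpha>))"
      using hbi_powr_0[of "1 - \<alpha>" R] R alpha by (simp add: algebra_simps)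
    show ?thesis unfolding m_def
      by (intro has_bochner_integral_add has_bochner_integral_mult_right h1 h2 h3 h4)
  qed
  have mint: "integrable lborel m" using hm by (simp add: has_bochner_integral_iff)
  have mval: "(LBINT t. m t) = B * K powr \<eta> * (a powr 2 / 2) + B * (2 * S / \<alpha>) * (a powr (2 - \<alpha>) / (2 - \<alpha>))
       + (B * \<epsilon> * (R powr (2 - \<alpha>) / (2 - \<alpha>)) + B * \<epsilon> * R powr (-\<alpha>) * (R powr 2 / 2))"
    using hm by (simp add: has_bochner_integral_iff)
  have t1: "0 \<le> (B * K powr \<eta>) * (indicator {0..a} t * t powr 1)" for t using B0 by simp
  have t2: "0 \<le> (B * (2 * S / \<alpha>)) * (indicator {0..a} t * t powr (1 - \<alpha>))" for t using B0 S0 alpha by simp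
  have t3: "0 \<le> (B * \<epsilon>) * (indicator {0..R} t * t powr (1 - \<alpha>))" for t using B0 eps by simp
  have t4: "0 \<le> (B * \<epsilon> * R powr (-\<alpha>)) * (indicator {0..R} t * t powr 1)" for t using B0 eps by simp
  have DR: "\<bar>Dd R\<bar> \<le> \<epsilon> * R powr (-\<alpha>)"
    using Dgood[OF R] Rc unfolding c_def by simp
  have Jb: "\<bar>J t\<bar> \<le> m t" for t
  proof (cases "0 < t \<and> t \<le> R")
    case False
    then have "J t = 0"
    proof (cases "t = 0")
      case True then show ?thesis by (simp add: J_def g_def)
    qed (auto simp: J_def split: split_indicator)
    then show ?thesis using t1[of t] t2[of t] t3[of t] t4[of t] unfolding m_def by simp
  next
    case True
    then have t0: "0 < t" and tR: "t \<le> R" by auto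
    have "\<bar>J t\<bar> = \<bar>g t\<bar> * \<bar>Dd t - Dd R\<bar>" using True by (simp add: J_def abs_mult)
    also have "\<dots> \<le> (B * t) * (\<bar>Dd t\<bar> + \<bar>Dd R\<bar>)"
      using gb[of t] t0 by (intro mult_mono) auto
    also have "\<dots> = B * t * \<bar>Dd t\<bar> + B * t * \<bar>Dd R\<bar>" by (simp add: algebra_simps)
    also have "B * t * \<bar>Dd R\<bar> \<le> (B * \<epsilon> * R powr (-\<alpha>)) * (indicator {0..R} t * t powr 1)"
    proof -
      have "B * t * \<bar>Dd R\<bar> \<le> B * t * (\<epsilon> * R powr (-\<alpha>))"
        using DR B0 t0 by (intro mult_left_mono) auto
      then show ?thesis using t0 tR by (simp add: mult_ac)
    qed
    also have "B * t * \<bar>Dd t\<bar> \<le> (B * K powr \<eta>) * (indicator {0..a} t * t powr 1) + (B * (2 * S / \<alpha>)) * (indicator {0..a} t * t powr (1 - \<alpha>))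
        + (B * \<epsilon>) * (indicator {0..R} t * t powr (1 - \<alpha>))"
    proof (cases "t < a")
      case True
      have "B * t * \<bar>Dd t\<bar> \<le> B * t * (K powr \<eta> + S * (2 / \<alpha>) * t powr (-\<alpha>))"
        using Dsmall[of t] B0 t0 by (intro mult_left_mono) auto
      also have "\<dots> = (B * K powr \<eta>) * t + (B * (2 * S / \<alpha>)) * (t * t powr (-\<alpha>))"
        by (simp add: algebra_simps)
      also have "\<dots> = (B * K powr \<eta>) * (indicator {0..a} t * t powr 1) + (B * (2 * S / \<alpha>)) * (indicator {0..a} t * t powr (1 - \<alpha>))"
        using True t0 t_powr[of t \<alpha>] by simp
      finally show ?thesis using t3[of t] by simp
    next
      case False
      have "u0 \<le> t * c" using False c0 unfolding a_def by (simp add: field_simps)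
      then have "B * t * \<bar>Dd t\<bar> \<le> B * t * (\<epsilon> * t powr (-\<alpha>))"
        using Dgood[OF t0] B0 t0 by (intro mult_left_mono) auto
      also have "\<dots> = (B * \<epsilon>) * (indicator {0..R} t * t powr (1 - \<alpha>))"
        using t0 tR t_powr[of t \<alpha>] by (simp add: algebra_simps)
      finally show ?thesis using t1[of t] t2[of t] by simp
    qed
    finally show ?thesis unfolding m_def by (simp add: algebra_simps)
  qed
  have Jbound: "\<bar>LBINT t. J t\<bar> \<le> (LBINT t. m t)"
    using Bochner_Integration.integral_norm_bound_integral[OF Jint mint] Jb by simp
  have cf: "continuous_on UNIV f"
    using df by (intro continuous_at_imp_continuous_on) (auto intro: DERIV_isCont)
  have [measurable]: "f \<in> borel_measurable borel"
    using cf by (auto intro: borel_measurable_continuous_onI)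
  have mQ': "measurable Q N = measurable borel N" for N :: "'b measure"
    using Qsets by (intro measurable_cong_sets) auto
  have spQ: "space Q = UNIV" using sets_eq_imp_space_eq[OF Qsets] by simp
  have Gb: "\<bar>indicator {h. R \<le> \<bar>h\<bar>} h * ((f (x + h) + f (x - h)) / 2 - f x)\<bar> \<le> 2 * F * indicator {h. R \<le> \<bar>h\<bar>} h" for h
  proof -
    have "\<bar>(f (x + h) + f (x - h)) / 2 - f x\<bar> \<le> 2 * F"
      using fb[of "x+h"] fb[of "x-h"] fb[of x] by (simp add: abs_le_iff field_simps; linarith)
    then show ?thesis by (auto split: split_indicator)
  qed
  have Tqb: "\<bar>Tq\<bar> \<le> 2 * F * measure Q {h. R \<le> \<bar>h\<bar>}"
  proof -
    have iA: "integrable Q (\<lambda>h. 2 * F * indicator {h. R \<le> \<bar>h\<bar>} h)"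
      by (rule Qps.integrable_const_bound[where B="2*F"]) (auto simp: mQ' F0 split: split_indicator)
    have iB: "integrable Q (\<lambda>h. indicator {h. R \<le> \<bar>h\<bar>} h * ((f (x + h) + f (x - h)) / 2 - f x))"
    proof (rule Qps.integrable_const_bound[where B="2*F"])
      have "\<bar>indicator {h. R \<le> \<bar>h\<bar>} h * ((f (x + h) + f (x - h)) / 2 - f x)\<bar> \<le> 2 * F" for h
        using Gb[of h] F0 by (auto split: split_indicator)
      then show "AE h in Q. norm (indicator {h. R \<le> \<bar>h\<bar>} h * ((f (x + h) + f (x - h)) / 2 - f x)) \<le> 2 * F"
        by simp
    qed (simp add: mQ')
    have "\<bar>Tq\<bar> \<le> (\<integral>h. 2 * F * indicator {h. R \<le> \<bar>h\<bar>} h \<partial>Q)"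
      unfolding Tq_def using Bochner_Integration.integral_norm_bound_integral[OF iB iA] Gb by simp
    also have "\<dots> = 2 * F * measure Q {h. R \<le> \<bar>h\<bar>}" by (simp add: spQ)
    finally show ?thesis .
  qed
  have VR: "K powr \<eta> * measure Q {h. R \<le> \<bar>h\<bar>} \<le> R powr (-\<alpha>) * (\<epsilon> + 2 * S / \<alpha>)"
  proof -
    have "K powr \<eta> * measure Q {h. R \<le> \<bar>h\<bar>} = Dd R + \<sigma> x * (2 / \<alpha> * R powr (-\<alpha>))"
      unfolding Dd_def V_def by simp
    also have "\<dots> \<le> \<epsilon> * R powr (-\<alpha>) + S * (2 / \<alpha> * R powr (-\<alpha>))"
      using DR mult_right_mono[OF sigS[of x], of "2 / \<alpha> * R powr (-\<alpha>)"] alpha by auto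
    finally show ?thesis by (simp add: algebra_simps)
  qed
  have KTq: "\<bar>K powr \<eta> * Tq\<bar> \<le> R powr (-\<alpha>) * (2 * F * (\<epsilon> + 2 * S / \<alpha>))"
  proof -
    have "\<bar>K powr \<eta> * Tq\<bar> = K powr \<eta> * \<bar>Tq\<bar>" by (simp add: abs_mult)
    also have "\<dots> \<le> K powr \<eta> * (2 * F * measure Q {h. R \<le> \<bar>h\<bar>})"
      by (intro mult_left_mono Tqb) simp
    also have "\<dots> = 2 * F * (K powr \<eta> * measure Q {h. R \<le> \<bar>h\<bar>})" by simp
    also have "\<dots> \<le> 2 * F * (R powr (-\<alpha>) * (\<epsilon> + 2 * S / \<alpha>))"
      by (intro mult_left_mono VR) (use F0 in simp)
    finally show ?thesis by (simp add: mult_ac)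
  qed
  have sTn: "\<bar>\<sigma> x * Tn\<bar> \<le> R powr (-\<alpha>) * (4 * S * F / \<alpha>)"
  proof -
    have hb: "has_bochner_integral lborel (\<lambda>h. indicator {h. R \<le> \<bar>h\<bar>} h * \<bar>h\<bar> powr (-(1 + \<alpha>))) (2 / \<alpha> * R powr (-\<alpha>))"
      using hbi_powr_inf_sym[of "-(1 + \<alpha>)" R] alpha R by (simp add: field_simps)
    have i3: "integrable lborel (\<lambda>h. 2 * F * (indicator {h. R \<le> \<bar>h\<bar>} h * \<bar>h\<bar> powr (-(1 + \<alpha>))))"
      using hb by (simp add: has_bochner_integral_iff)
    have i4: "integrable lborel (\<lambda>h. indicator {h. R \<le> \<bar>h\<bar>} h * ((f (x + h) + f (x - h)) / 2 - f x) * \<bar>h\<bar> powr (-(1 + \<alpha>)))"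
    proof (rule Bochner_Integration.integrable_bound[OF i3])
      show "AE h in lborel. norm (indicator {h. R \<le> \<bar>h\<bar>} h * ((f (x + h) + f (x - h)) / 2 - f x) * \<bar>h\<bar> powr (-(1 + \<alpha>)))
          \<le> norm (2 * F * (indicator {h. R \<le> \<bar>h\<bar>} h * \<bar>h\<bar> powr (-(1 + \<alpha>))))"
      proof (intro AE_I2)
        fix h :: real
        have "\<bar>indicator {h. R \<le> \<bar>h\<bar>} h * ((f (x + h) + f (x - h)) / 2 - f x) * \<bar>h\<bar> powr (-(1 + \<alpha>))\<bar>
            \<le> 2 * F * indicator {h. R \<le> \<bar>h\<bar>} h * \<bar>h\<bar> powr (-(1 + \<alpha>))"
          using Gb[of h] by (simp add: abs_mult mult_right_mono)
        then show "norm (indicator {h. R \<le> \<bar>h\<bar>} h * ((f (x + h) + f (x - h)) / 2 - f x) * \<bar>h\<bar> powr (-(1 + \<alpha>)))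
          \<le> norm (2 * F * (indicator {h. R \<le> \<bar>h\<bar>} h * \<bar>h\<bar> powr (-(1 + \<alpha>))))"
          using F0 by (simp add: mult_ac)
      qed
    qed measurable
    have "\<bar>Tn\<bar> \<le> (LBINT h. 2 * F * (indicator {h. R \<le> \<bar>h\<bar>} h * \<bar>h\<bar> powr (-(1 + \<alpha>))))"
    proof -
      have "norm (indicator {h. R \<le> \<bar>h\<bar>} h * ((f (x + h) + f (x - h)) / 2 - f x) * \<bar>h\<bar> powr (-(1 + \<alpha>)))
          \<le> 2 * F * (indicator {h. R \<le> \<bar>h\<bar>} h * \<bar>h\<bar> powr (-(1 + \<alpha>)))" for h
      proof -
        have "\<bar>indicator {h. R \<le> \<bar>h\<bar>} h * ((f (x + h) + f (x - h)) / 2 - f x)\<bar> * \<bar>h\<bar> powr (-(1 + \<alpha>))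
            \<le> 2 * F * indicator {h. R \<le> \<bar>h\<bar>} h * \<bar>h\<bar> powr (-(1 + \<alpha>))"
          by (rule mult_right_mono[OF Gb]) simp
        then show ?thesis by (simp add: abs_mult mult_ac)
      qed
      then show ?thesis unfolding Tn_def using Bochner_Integration.integral_norm_bound_integral[OF i4 i3] by simp
    qed
    also have "\<dots> = 2 * F * (2 / \<alpha> * R powr (-\<alpha>))"
      using hb by (simp add: has_bochner_integral_iff)
    finally have "\<bar>Tn\<bar> \<le> 2 * F * (2 / \<alpha> * R powr (-\<alpha>))" .
    then have "\<sigma> x * \<bar>Tn\<bar> \<le> S * (2 * F * (2 / \<alpha> * R powr (-\<alpha>)))"
      using sig0[of x] sigS[of x] F0 alpha by (intro mult_mono) auto
    then show ?thesis using sig0[of x] by (simp add: abs_mult field_simps)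
  qed
  have "\<bar>K powr \<eta> * (LINT h|Q. f (x + h) - f x)
      - \<sigma> x * (LINT z|lborel. (f (x + z) - f x - f' x * z * (if \<bar>z\<bar> \<le> 1 then 1 else 0)) * \<bar>z\<bar> powr (-(1 + \<alpha>)))\<bar>
      \<le> \<bar>LBINT t. J t\<bar> + \<bar>K powr \<eta> * Tq\<bar> + \<bar>\<sigma> x * Tn\<bar>"
    unfolding main_eq by linarith
  also have "\<dots> \<le> (LBINT t. m t) + R powr (-\<alpha>) * (2 * F * (\<epsilon> + 2 * S / \<alpha>)) + R powr (-\<alpha>) * (4 * S * F / \<alpha>)"
    using Jbound KTq sTn by linarith
  finally show ?thesis unfolding mval Q_def c_def a_def by (simp add: algebra_simps)
qed



lemma main_conv:
  fixes \<alpha> \<eta> :: real and P :: "real \<Rightarrow> real measure" and \<sigma> f :: "real \<Rightarrow> real"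
  assumes alpha: "0 < \<alpha>" "\<alpha> < 2" and eta: "0 < \<eta>"
    and prob: "\<And>x. prob_space (P x)"
    and borel: "\<And>x. sets (P x) = sets borel"
    and symm: "\<And>x. distr (P x) borel uminus = P x"
    and sigma_nonneg: "\<And>x. 0 \<le> \<sigma> x"
    and sigma_bdd: "bounded (range \<sigma>)"
    and tail: "uniform_limit UNIV
                 (\<lambda>u x. u powr \<alpha> * measure (P x) {h. \<bar>h\<bar> \<ge> u})
                 (\<lambda>x. 2 * \<sigma> x / \<alpha>) at_top"
    and f: "C2b f"
  shows "uniform_limit UNIV (\<lambda>K x. K powr \<eta> * (LINT h|distr (P x) borel (\<lambda>h. h / K powr (\<eta> / \<alpha>)). f (x + h) - f x))
           (\<lambda>x. \<sigma> x * (LINT z|lborel.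
               (f (x + z) - f x - deriv f x * z * (if \<bar>z\<bar> \<le> 1 then 1 else 0))
                 * \<bar>z\<bar> powr (-(1 + \<alpha>)))) at_top"
proof -
  obtain f' f'' where df: "\<And>x. (f has_real_derivative f' x) (at x)"
    and df': "\<And>x. (f' has_real_derivative f'' x) (at x)"
    and bf: "bounded (range f)" and bf'': "bounded (range f'')"
    using f unfolding C2b_def by blast
  obtain F where fb: "\<And>y. \<bar>f y\<bar> \<le> F" using bf unfolding bounded_iff by auto
  obtain B where f''b: "\<And>y. \<bar>f'' y\<bar> \<le> B" using bf'' unfolding bounded_iff by auto
  obtain S where Sb: "\<forall>y\<in>range \<sigma>. norm y \<le> S" using sigma_bdd unfolding bounded_iff by blast
  have sigS: "\<sigma> x \<le> S" for x
    using Sb[rule_format, of "\<sigma> x"] by auto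
  have F0: "0 \<le> F" using fb[of 0] by simp
  have B0: "0 \<le> B" using f''b[of 0] by simp
  have S0: "0 \<le> S" using sigma_nonneg[of 0] sigS[of 0] by simp
  have dv: "deriv f x = f' x" for x using df by (rule DERIV_imp_deriv)
  show ?thesis
    unfolding uniform_limit_iff dv
  proof (intro allI impI)
    fix e :: real assume e: "0 < e"
    define C1 where "C1 = 2 * F * (1 + 2 * S / \<alpha>) + 4 * S * F / \<alpha>"
    have C10: "0 \<le> C1" unfolding C1_def using F0 S0 alpha by simp
    have "((\<lambda>R. C1 * R powr (-\<alpha>)) \<longlongrightarrow> 0) at_top"
      by (intro tendsto_mult_right_zero tendsto_neg_powr filterlim_ident) (use alpha in simp)
    then have "\<forall>\<^sub>F R in at_top. C1 * R powr (-\<alpha>) < e / 3"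
      using e by (intro order_tendstoD(2)) auto
    then obtain N where N: "\<And>R. N \<le> R \<Longrightarrow> C1 * R powr (-\<alpha>) < e / 3"
      unfolding eventually_at_top_linorder by blast
    define R where "R = max N 1"
    have R1: "1 \<le> R" and R0: "0 < R" unfolding R_def by auto
    have RC1: "R powr (-\<alpha>) * C1 < e / 3" using N[of R] unfolding R_def by (simp add: mult.commute)
    define C2 where "C2 = B * R powr (2 - \<alpha>) / (2 - \<alpha>) + B * R powr (-\<alpha>) * R powr 2 / 2"
    have C20: "0 \<le> C2" unfolding C2_def using B0 alpha by simp
    define \<epsilon> where "\<epsilon> = min 1 (e / (3 * (C2 + 1)))"
    have eps0: "0 < \<epsilon>" unfolding \<epsilon>_def using e C20 by simp
    have eps1: "\<epsilon> \<le> 1" unfolding \<epsilon>_def by simp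
    have epsC2: "\<epsilon> * C2 < e / 3"
    proof -
      have "\<epsilon> * C2 \<le> e / (3 * (C2 + 1)) * C2"
        unfolding \<epsilon>_def using C20 by (intro mult_right_mono) auto
      also have "\<dots> < e / (3 * (C2 + 1)) * (C2 + 1)"
        using e C20 by (intro mult_strict_left_mono) auto
      also have "\<dots> = e / 3"
      proof -
        have "C2 + 1 \<noteq> 0" using C20 by simp
        then show ?thesis by (simp add: field_simps)
      qed
      finally show ?thesis .
    qed
    from tail[unfolded uniform_limit_iff, rule_format, OF eps0]
    obtain N' where N': "\<And>u x. N' \<le> u \<Longrightarrow> dist (u powr \<alpha> * measure (P x) {h. u \<le> \<bar>h\<bar>}) (2 * \<sigma> x / \<alpha>) < \<epsilon>"
      unfolding eventually_at_top_linorder by blast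
    define u0 where "u0 = max N' 1"
    have u0: "0 < u0" unfolding u0_def by simp
    have tb: "\<bar>u powr \<alpha> * measure (P x) {h. u \<le> \<bar>h\<bar>} - 2 * \<sigma> x / \<alpha>\<bar> < \<epsilon>" if "u0 \<le> u" for u x
      using N'[of u x] that unfolding u0_def by (simp add: dist_real_def)
    define \<Phi> where "\<Phi> = (\<lambda>K. B * K powr \<eta> * (u0 / K powr (\<eta> / \<alpha>)) powr 2 / 2
        + B * (2 * S / \<alpha>) * (u0 / K powr (\<eta> / \<alpha>)) powr (2 - \<alpha>) / (2 - \<alpha>))"
    have \<Phi>lim: "(\<Phi> \<longlongrightarrow> 0) at_top"
    proof -
      have l1: "((\<lambda>K::real. K powr (\<eta> - 2 * (\<eta> / \<alpha>))) \<longlongrightarrow> 0) at_top"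
      proof (intro tendsto_neg_powr filterlim_ident)
        have "\<eta> < 2 * (\<eta> / \<alpha>)" using alpha eta by (simp add: field_simps)
        then show "\<eta> - 2 * (\<eta> / \<alpha>) < 0" by simp
      qed
      have l2: "((\<lambda>K::real. K powr (-(\<eta> / \<alpha> * (2 - \<alpha>)))) \<longlongrightarrow> 0) at_top"
        by (intro tendsto_neg_powr filterlim_ident) (use alpha eta in simp)
      have "((\<lambda>K. (B * u0 powr 2 / 2) * K powr (\<eta> - 2 * (\<eta> / \<alpha>))
          + (B * (2 * S / \<alpha>) * u0 powr (2 - \<alpha>) / (2 - \<alpha>)) * K powr (-(\<eta> / \<alpha> * (2 - \<alpha>)))) \<longlongrightarrow> 0 + 0) at_top"
        by (intro tendsto_add tendsto_mult_right_zero l1 l2)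
      moreover have "\<forall>\<^sub>F K in at_top. (B * u0 powr 2 / 2) * K powr (\<eta> - 2 * (\<eta> / \<alpha>))
          + (B * (2 * S / \<alpha>) * u0 powr (2 - \<alpha>) / (2 - \<alpha>)) * K powr (-(\<eta> / \<alpha> * (2 - \<alpha>))) = \<Phi> K"
        using eventually_gt_at_top[of 0]
      proof eventually_elim
        case (elim K)
        have a: "(u0 / K powr (\<eta> / \<alpha>)) powr 2 = u0 powr 2 / K powr (2 * (\<eta> / \<alpha>))"
          by (simp add: powr_divide powr_powr mult.commute)
        have b: "(u0 / K powr (\<eta> / \<alpha>)) powr (2 - \<alpha>) = u0 powr (2 - \<alpha>) * K powr (-(\<eta> / \<alpha> * (2 - \<alpha>)))"
          by (simp only: powr_divide powr_powr powr_minus) (simp add: divide_inverse)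
        have c: "K powr \<eta> / K powr (2 * (\<eta> / \<alpha>)) = K powr (\<eta> - 2 * (\<eta> / \<alpha>))"
          by (simp add: powr_diff)
        show ?case unfolding \<Phi>_def a b c[symmetric] by (simp add: field_simps)
      qed
      ultimately show ?thesis by (simp add: tendsto_cong)
    qed
    have ev1: "\<forall>\<^sub>F K in at_top. \<Phi> K < e / 3"
      using order_tendstoD(2)[OF \<Phi>lim, of "e / 3"] e by simp
    have ev2: "\<forall>\<^sub>F K in at_top. u0 \<le> R * K powr (\<eta> / \<alpha>)"
    proof -
      have "((\<lambda>K::real. K powr (-(\<eta> / \<alpha>))) \<longlongrightarrow> 0) at_top"
        by (intro tendsto_neg_powr filterlim_ident) (use alpha eta in simp)
      then have "\<forall>\<^sub>F K in at_top. K powr (-(\<eta> / \<alpha>)) < R / u0"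
        using R0 u0 by (intro order_tendstoD(2)) auto
      then show ?thesis using eventually_gt_at_top[of 0]
      proof eventually_elim
        case (elim K)
        then have "u0 * K powr (-(\<eta> / \<alpha>)) < R" using u0 by (simp add: field_simps)
        then have "u0 < R * K powr (\<eta> / \<alpha>)" using elim by (simp add: powr_minus field_simps)
        then show ?case by simp
      qed
    qed
    show "\<forall>\<^sub>F K in at_top. \<forall>x\<in>UNIV.
        dist (K powr \<eta> * (LINT h|distr (P x) borel (\<lambda>h. h / K powr (\<eta> / \<alpha>)). f (x + h) - f x))
             (\<sigma> x * (LINT z|lborel. (f (x + z) - f x - f' x * z * (if \<bar>z\<bar> \<le> 1 then 1 else 0)) * \<bar>z\<bar> powr (-(1 + \<alpha>)))) < e"
      using ev1 ev2 eventually_gt_at_top[of 0]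
    proof eventually_elim
      case (elim K)
      show ?case
      proof
        fix x :: real
        have "dist (K powr \<eta> * (LINT h|distr (P x) borel (\<lambda>h. h / K powr (\<eta> / \<alpha>)). f (x + h) - f x))
             (\<sigma> x * (LINT z|lborel. (f (x + z) - f x - f' x * z * (if \<bar>z\<bar> \<le> 1 then 1 else 0)) * \<bar>z\<bar> powr (-(1 + \<alpha>))))
          \<le> \<Phi> K + \<epsilon> * C2 + R powr (-\<alpha>) * (2 * F * (\<epsilon> + 2 * S / \<alpha>) + 4 * S * F / \<alpha>)"
          using key_bound[OF alpha eta prob borel symm sigma_nonneg sigS df df' fb f''b R0 eps0 u0 tb, where K=K and x=x] elim
          unfolding dist_real_def \<Phi>_def C2_def by (simp add: algebra_simps)
        also have "R powr (-\<alpha>) * (2 * F * (\<epsilon> + 2 * S / \<alpha>) + 4 * S * F / \<alpha>) \<le> R powr (-\<alpha>) * C1"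
          unfolding C1_def using eps1 F0 by (intro mult_left_mono add_right_mono mult_left_mono) auto
        finally show "dist (K powr \<eta> * (LINT h|distr (P x) borel (\<lambda>h. h / K powr (\<eta> / \<alpha>)). f (x + h) - f x))
             (\<sigma> x * (LINT z|lborel. (f (x + z) - f x - f' x * z * (if \<bar>z\<bar> \<le> 1 then 1 else 0)) * \<bar>z\<bar> powr (-(1 + \<alpha>)))) < e"
          using elim(1) epsC2 RC1 by linarith
      qed
    qed
  qed
qed


theorem proposition3p1:
  fixes \<alpha> \<eta> :: real and P :: "real \<Rightarrow> real measure" and \<sigma> :: "real \<Rightarrow> real"
  assumes alpha: "0 < \<alpha>" "\<alpha> < 2" and eta: "0 < \<eta>"
    and prob: "\<And>x. prob_space (P x)"
    and borel: "\<And>x. sets (P x) = sets borel"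
    and symm: "\<And>x. distr (P x) borel uminus = P x"
    and sigma_nonneg: "\<And>x. 0 \<le> \<sigma> x"
    and sigma_bdd: "bounded (range \<sigma>)"
    and tail: "uniform_limit UNIV
                 (\<lambda>u x. u powr \<alpha> * measure (P x) {h. \<bar>h\<bar> \<ge> u})
                 (\<lambda>x. 2 * \<sigma> x / \<alpha>) at_top"
  defines "M \<equiv> (\<lambda>K x. distr (P x) borel (\<lambda>h. h / K powr (\<eta> / \<alpha>)))"
    and "L \<equiv> (\<lambda>f x. \<sigma> x * (LINT z|lborel.
               (f (x + z) - f x - deriv f x * z * (if \<bar>z\<bar> \<le> 1 then 1 else 0))
                 * \<bar>z\<bar> powr (-(1 + \<alpha>))))"
  shows "(1 < \<alpha> \<longrightarrow> (\<forall>f. C2b f \<longrightarrow>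
            uniform_limit UNIV (\<lambda>K x. K powr \<eta> * (LINT h|M K x. f (x + h) - f x))
              (L f) at_top))
       \<and> (\<alpha> \<le> 1 \<longrightarrow> (\<forall>f. C2b f \<and> compact_support f \<longrightarrow>
            uniform_limit UNIV (\<lambda>K x. K powr \<eta> * (LINT h|M K x. f (x + h) - f x))
              (L f) at_top))"
  proof -
  have conv: "uniform_limit UNIV (\<lambda>K x. K powr \<eta> * (LINT h|M K x. f (x + h) - f x)) (L f) at_top"
    if "C2b f" for f
    unfolding M_def L_def
    by (rule main_conv[OF alpha eta prob borel symm sigma_nonneg sigma_bdd tail that])
  show ?thesis using conv by blast
qed

end
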